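(* Let $f\in\mathcal{H}^s_{4,3}$. Then $f\in\mathcal{P}^{s+}_{4,3}$ if and only if $f(0,0,0,1)\ge0$, $f(0,0,1,1)\ge0$, $f(0,1,1,1)\ge0$ and $f(1,1,1,1)\ge0$.
   Context: $\mathcal{H}^s_{4,3}$ is the real vector space of symmetric homogeneous cubic forms in $\mathbb{R}[a,b,c,d]$ (invariant under all permutations of the four variables), and $\mathcal{P}^{s+}_{4,3}=\{f\in\mathcal{H}^s_{4,3}: f(x)\ge0\text{ for all }x\in\mathbb{R}_{\ge0}^4\}$. *)

theory Defs
  imports "HOL-Analysis.Analysis"
begin

text \<open>Cubic forms in the four variables a,b,c,d (coordinates 1..4 of real^4) are
  represented by their polynomial functions: f is a homogeneous cubic form iff it is a
  real linear combination of the degree-3 monomials.\<close>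

definition cubic_form4 :: "(real^4 \<Rightarrow> real) \<Rightarrow> bool" where
  "cubic_form4 f \<longleftrightarrow>
     (\<exists>coef :: nat^4 \<Rightarrow> real. \<forall>x.
        f x = (\<Sum>\<alpha>\<in>{\<alpha>::nat^4. (\<Sum>i\<in>UNIV. \<alpha>$i) = 3}. coef \<alpha> * (\<Prod>i\<in>UNIV. (x$i) ^ (\<alpha>$i))))"

definition symmetric4 :: "(real^4 \<Rightarrow> real) \<Rightarrow> bool" where
  "symmetric4 f \<longleftrightarrow> (\<forall>\<sigma> x. \<sigma> permutes (UNIV :: 4 set) \<longrightarrow> f (\<chi> i. x $ \<sigma> i) = f x)"

definition H_s_4_3 :: "(real^4 \<Rightarrow> real) set" where
  "H_s_4_3 = {f. cubic_form4 f \<and> symmetric4 f}"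

definition P_splus_4_3 :: "(real^4 \<Rightarrow> real) set" where
  "P_splus_4_3 = {f \<in> H_s_4_3. \<forall>x. (\<forall>i. 0 \<le> x$i) \<longrightarrow> 0 \<le> f x}"

end

theory Submission imports Defs begin
lemma vector_4 [simp]:
 "(vector [x,y,z,w] ::('a::zero)^4)$1 = x"
 "(vector [x,y,z,w] ::('a::zero)^4)$2 = y"
 "(vector [x,y,z,w] ::('a::zero)^4)$3 = z"
 "(vector [x,y,z,w] ::('a::zero)^4)$4 = w"
  unfolding vector_def by simp_all
lemma vec4_eta: "vector [v$1, v$2, v$3, v$4] = (v::'a::zero^4)"
  unfolding vec_eq_iff by (metis (mono_tags) exhaust_4 vector_4)

lemma prod_UNIV4: "prod h (UNIV::4 set) = h 1 * h 2 * h 3 * h 4"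
  unfolding UNIV_4 by (simp add: ac_simps)

definition T4 :: "(nat*nat*nat*nat) set" where "T4 = {(0,0,0,3), (0,0,1,2), (0,0,2,1), (0,0,3,0), (0,1,0,2), (0,1,1,1), (0,1,2,0), (0,2,0,1), (0,2,1,0), (0,3,0,0), (1,0,0,2), (1,0,1,1), (1,0,2,0), (1,1,0,1), (1,1,1,0), (1,2,0,0), (2,0,0,1), (2,0,1,0), (2,1,0,0), (3,0,0,0)}"

lemma T4_iff: "(a,b,c,d) \<in> T4 \<longleftrightarrow> a+b+c+d = (3::nat)"
proof
  assume h: "a+b+c+d = 3"
  have "a=0 \<or> a=1 \<or> a=2 \<or> a=3" "b=0 \<or> b=1 \<or> b=2 \<or> b=3" "c=0 \<or> c=1 \<or> c=2 \<or> c=3"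
    using h by arith+
  then show "(a,b,c,d) \<in> T4" using h unfolding T4_def by (elim disjE) simp_all
qed (auto simp: T4_def)

definition E :: "(nat\<Rightarrow>nat\<Rightarrow>nat\<Rightarrow>nat\<Rightarrow>real) \<Rightarrow> real\<Rightarrow>real\<Rightarrow>real\<Rightarrow>real\<Rightarrow>real" where
 "E K x1 x2 x3 x4 = K 0 0 0 3 * x4^3 + K 0 0 1 2 * x3 * x4^2 + K 0 0 2 1 * x3^2 * x4 + K 0 0 3 0 * x3^3 + K 0 1 0 2 * x2 * x4^2 + K 0 1 1 1 * x2 * x3 * x4 + K 0 1 2 0 * x2 * x3^2 + K 0 2 0 1 * x2^2 * x4 + K 0 2 1 0 * x2^2 * x3 + K 0 3 0 0 * x2^3 + K 1 0 0 2 * x1 * x4^2 + K 1 0 1 1 * x1 * x3 * x4 + K 1 0 2 0 * x1 * x3^2 + K 1 1 0 1 * x1 * x2 * x4 + K 1 1 1 0 * x1 * x2 * x3 + K 1 2 0 0 * x1 * x2^2 + K 2 0 0 1 * x1^2 * x4 + K 2 0 1 0 * x1^2 * x3 + K 2 1 0 0 * x1^2 * x2 + K 3 0 0 0 * x1^3"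

lemma expand:
  assumes "cubic_form4 f"
  shows "\<exists>K. \<forall>x1 x2 x3 x4. f (vector [x1,x2,x3,x4]) = E K x1 x2 x3 x4"
proof -
  obtain coef :: "nat^4 \<Rightarrow> real" where hc: "\<And>x. f x = (\<Sum>\<alpha>\<in>{\<alpha>::nat^4. (\<Sum>i\<in>UNIV. \<alpha>$i) = 3}. coef \<alpha> * (\<Prod>i\<in>UNIV. (x$i) ^ (\<alpha>$i)))"
    using assms unfolding cubic_form4_def by blast
  define g where "g = (\<lambda>(a::nat,b::nat,c::nat,d::nat). (vector [a,b,c,d] :: nat^4))"
  have S: "{\<alpha>::nat^4. (\<Sum>i\<in>UNIV. \<alpha>$i) = 3} = g ` T4"
  proof (rule set_eqI, rule iffI)
    fix \<alpha> :: "nat^4" assume "\<alpha> \<in> {\<alpha>::nat^4. (\<Sum>i\<in>UNIV. \<alpha>$i) = 3}"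
    hence "(\<alpha>$1, \<alpha>$2, \<alpha>$3, \<alpha>$4) \<in> T4" by (simp add: T4_iff sum_4)
    moreover have "\<alpha> = g (\<alpha>$1, \<alpha>$2, \<alpha>$3, \<alpha>$4)" by (simp add: g_def vec4_eta)
    ultimately show "\<alpha> \<in> g ` T4" by blast
  next
    fix \<alpha> :: "nat^4" assume "\<alpha> \<in> g ` T4"
    then obtain a b c d where "(a,b,c,d) \<in> T4" "\<alpha> = g (a,b,c,d)" by auto
    thus "\<alpha> \<in> {\<alpha>::nat^4. (\<Sum>i\<in>UNIV. \<alpha>$i) = 3}" by (simp add: T4_iff sum_4 g_def)
  qed
  have inj: "inj_on g T4"
    by (auto simp: inj_on_def g_def vec_eq_iff forall_4)
  define K where "K = (\<lambda>a b c d. coef (vector [a,b,c,d]))"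
  have "f (vector [x1,x2,x3,x4]) = E K x1 x2 x3 x4" for x1 x2 x3 x4
  proof -
    have "f (vector [x1,x2,x3,x4]) = (\<Sum>t\<in>T4. coef (g t) * (x1 ^ (g t $ 1) * x2 ^ (g t $ 2) * x3 ^ (g t $ 3) * x4 ^ (g t $ 4)))"
      unfolding hc S sum.reindex[OF inj] by (simp add: prod_UNIV4)
    also have "\<dots> = E K x1 x2 x3 x4"
      unfolding T4_def E_def K_def g_def by (simp add: mult.assoc)
    finally show ?thesis .
  qed
  thus ?thesis by blast
qed
lemma sw12: assumes "symmetric4 f" shows "f (vector [x2, x1, x3, x4]) = f (vector [x1, x2, x3, x4])"
proof -
  have p: "Transposition.transpose 1 (2::4) permutes UNIV" by (rule permutes_swap_id) auto
  have "(\<chi> i. (vector [x1, x2, x3, x4]::real^4) $ Transposition.transpose 1 2 i) = vector [x2, x1, x3, x4]"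
    by (simp add: vec_eq_iff forall_4 Transposition.transpose_def)
  with assms p show ?thesis unfolding symmetric4_def by metis
qed

lemma sw13: assumes "symmetric4 f" shows "f (vector [x3, x2, x1, x4]) = f (vector [x1, x2, x3, x4])"
proof -
  have p: "Transposition.transpose 1 (3::4) permutes UNIV" by (rule permutes_swap_id) auto
  have "(\<chi> i. (vector [x1, x2, x3, x4]::real^4) $ Transposition.transpose 1 3 i) = vector [x3, x2, x1, x4]"
    by (simp add: vec_eq_iff forall_4 Transposition.transpose_def)
  with assms p show ?thesis unfolding symmetric4_def by metis
qed

lemma sw14: assumes "symmetric4 f" shows "f (vector [x4, x2, x3, x1]) = f (vector [x1, x2, x3, x4])"
proof -
  have p: "Transposition.transpose 1 (4::4) permutes UNIV" by (rule permutes_swap_id) auto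
  have "(\<chi> i. (vector [x1, x2, x3, x4]::real^4) $ Transposition.transpose 1 4 i) = vector [x4, x2, x3, x1]"
    by (simp add: vec_eq_iff forall_4 Transposition.transpose_def)
  with assms p show ?thesis unfolding symmetric4_def by metis
qed

lemma sw23: assumes "symmetric4 f" shows "f (vector [x1, x3, x2, x4]) = f (vector [x1, x2, x3, x4])"
proof -
  have p: "Transposition.transpose 2 (3::4) permutes UNIV" by (rule permutes_swap_id) auto
  have "(\<chi> i. (vector [x1, x2, x3, x4]::real^4) $ Transposition.transpose 2 3 i) = vector [x1, x3, x2, x4]"
    by (simp add: vec_eq_iff forall_4 Transposition.transpose_def)
  with assms p show ?thesis unfolding symmetric4_def by metis
qed

lemma sw24: assumes "symmetric4 f" shows "f (vector [x1, x4, x3, x2]) = f (vector [x1, x2, x3, x4])"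
proof -
  have p: "Transposition.transpose 2 (4::4) permutes UNIV" by (rule permutes_swap_id) auto
  have "(\<chi> i. (vector [x1, x2, x3, x4]::real^4) $ Transposition.transpose 2 4 i) = vector [x1, x4, x3, x2]"
    by (simp add: vec_eq_iff forall_4 Transposition.transpose_def)
  with assms p show ?thesis unfolding symmetric4_def by metis
qed

lemma sw34: assumes "symmetric4 f" shows "f (vector [x1, x2, x4, x3]) = f (vector [x1, x2, x3, x4])"
proof -
  have p: "Transposition.transpose 3 (4::4) permutes UNIV" by (rule permutes_swap_id) auto
  have "(\<chi> i. (vector [x1, x2, x3, x4]::real^4) $ Transposition.transpose 3 4 i) = vector [x1, x2, x4, x3]"
    by (simp add: vec_eq_iff forall_4 Transposition.transpose_def)
  with assms p show ?thesis unfolding symmetric4_def by metis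
qed

definition m3 :: "real\<Rightarrow>real\<Rightarrow>real\<Rightarrow>real\<Rightarrow>real" where "m3 x1 x2 x3 x4 = x1^3 + x2^3 + x3^3 + x4^3"
definition m21 :: "real\<Rightarrow>real\<Rightarrow>real\<Rightarrow>real\<Rightarrow>real" where "m21 x1 x2 x3 x4 = x1^2*x2 + x1^2*x3 + x1^2*x4 + x2^2*x1 + x2^2*x3 + x2^2*x4 + x3^2*x1 + x3^2*x2 + x3^2*x4 + x4^2*x1 + x4^2*x2 + x4^2*x3"
definition m111 :: "real\<Rightarrow>real\<Rightarrow>real\<Rightarrow>real\<Rightarrow>real" where "m111 x1 x2 x3 x4 = x1*x2*x3 + x1*x2*x4 + x1*x3*x4 + x2*x3*x4"

lemma sym_structure:
  assumes "f \<in> H_s_4_3"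
  shows "\<exists>A B C. \<forall>x1 x2 x3 x4. f (vector [x1,x2,x3,x4]) = A * m3 x1 x2 x3 x4 + B * m21 x1 x2 x3 x4 + C * m111 x1 x2 x3 x4"
proof -
  have cf: "cubic_form4 f" and sym: "symmetric4 f" using assms by (auto simp: H_s_4_3_def)
  obtain K where hK: "\<And>x1 x2 x3 x4. f (vector [x1,x2,x3,x4]) = E K x1 x2 x3 x4" using expand[OF cf] by blast
  have s12: "E K x2 x1 x3 x4 = E K x1 x2 x3 x4" for x1 x2 x3 x4
    using sw12[OF sym, of x1 x2 x3 x4] hK by simp
  have s13: "E K x3 x2 x1 x4 = E K x1 x2 x3 x4" for x1 x2 x3 x4
    using sw13[OF sym, of x1 x2 x3 x4] hK by simp
  have s14: "E K x4 x2 x3 x1 = E K x1 x2 x3 x4" for x1 x2 x3 x4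
    using sw14[OF sym, of x1 x2 x3 x4] hK by simp
  have s23: "E K x1 x3 x2 x4 = E K x1 x2 x3 x4" for x1 x2 x3 x4
    using sw23[OF sym, of x1 x2 x3 x4] hK by simp
  have s24: "E K x1 x4 x3 x2 = E K x1 x2 x3 x4" for x1 x2 x3 x4
    using sw24[OF sym, of x1 x2 x3 x4] hK by simp
  have s34: "E K x1 x2 x4 x3 = E K x1 x2 x3 x4" for x1 x2 x3 x4
    using sw34[OF sym, of x1 x2 x3 x4] hK by simp
  have t3_1: "K 3 0 0 0 = K 0 0 0 3" using s14[of 1 0 0 0] by (simp add: E_def)
  have t3_2: "K 0 3 0 0 = K 0 0 0 3" using s24[of 0 1 0 0] by (simp add: E_def)
  have t3_3: "K 0 0 3 0 = K 0 0 0 3" using s34[of 0 0 1 0] by (simp add: E_def)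
  have a12: "K 1 2 0 0 = K 2 1 0 0" using s12[of 2 1 0 0] t3_1 t3_2 t3_3 by (simp add: E_def; linarith)
  have a13: "K 1 0 2 0 = K 2 0 1 0" using s13[of 2 0 1 0] t3_1 t3_2 t3_3 by (simp add: E_def; linarith)
  have a14: "K 1 0 0 2 = K 2 0 0 1" using s14[of 2 0 0 1] t3_1 t3_2 t3_3 by (simp add: E_def; linarith)
  have a23: "K 0 1 2 0 = K 0 2 1 0" using s23[of 0 2 1 0] t3_1 t3_2 t3_3 by (simp add: E_def; linarith)
  have a24: "K 0 1 0 2 = K 0 2 0 1" using s24[of 0 2 0 1] t3_1 t3_2 t3_3 by (simp add: E_def; linarith)
  have a34: "K 0 0 1 2 = K 0 0 2 1" using s34[of 0 0 2 1] t3_1 t3_2 t3_3 by (simp add: E_def; linarith)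
  have b123: "K 2 0 1 0 = K 2 1 0 0" using s23[of 2 1 0 0] t3_1 t3_2 t3_3 a12 a13 a14 a23 a24 a34 by (simp add: E_def; linarith)
  have b124: "K 2 0 0 1 = K 2 1 0 0" using s24[of 2 1 0 0] t3_1 t3_2 t3_3 a12 a13 a14 a23 a24 a34 by (simp add: E_def; linarith)
  have b134: "K 2 0 0 1 = K 2 0 1 0" using s34[of 2 0 1 0] t3_1 t3_2 t3_3 a12 a13 a14 a23 a24 a34 by (simp add: E_def; linarith)
  have b213: "K 0 2 1 0 = K 1 2 0 0" using s13[of 1 2 0 0] t3_1 t3_2 t3_3 a12 a13 a14 a23 a24 a34 by (simp add: E_def; linarith)
  have b214: "K 0 2 0 1 = K 1 2 0 0" using s14[of 1 2 0 0] t3_1 t3_2 t3_3 a12 a13 a14 a23 a24 a34 by (simp add: E_def; linarith)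
  have b234: "K 0 2 0 1 = K 0 2 1 0" using s34[of 0 2 1 0] t3_1 t3_2 t3_3 a12 a13 a14 a23 a24 a34 by (simp add: E_def; linarith)
  have b312: "K 0 1 2 0 = K 1 0 2 0" using s12[of 1 0 2 0] t3_1 t3_2 t3_3 a12 a13 a14 a23 a24 a34 by (simp add: E_def; linarith)
  have b314: "K 0 0 2 1 = K 1 0 2 0" using s14[of 1 0 2 0] t3_1 t3_2 t3_3 a12 a13 a14 a23 a24 a34 by (simp add: E_def; linarith)
  have b324: "K 0 0 2 1 = K 0 1 2 0" using s24[of 0 1 2 0] t3_1 t3_2 t3_3 a12 a13 a14 a23 a24 a34 by (simp add: E_def; linarith)
  have b412: "K 0 1 0 2 = K 1 0 0 2" using s12[of 1 0 0 2] t3_1 t3_2 t3_3 a12 a13 a14 a23 a24 a34 by (simp add: E_def; linarith)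
  have b413: "K 0 0 1 2 = K 1 0 0 2" using s13[of 1 0 0 2] t3_1 t3_2 t3_3 a12 a13 a14 a23 a24 a34 by (simp add: E_def; linarith)
  have b423: "K 0 0 1 2 = K 0 1 0 2" using s23[of 0 1 0 2] t3_1 t3_2 t3_3 a12 a13 a14 a23 a24 a34 by (simp add: E_def; linarith)
  have c12: "K 2 1 0 0 = K 0 0 2 1" using a12 a13 a14 a23 a24 a34 b123 b124 b134 b213 b214 b234 b312 b314 b324 b412 b413 b423 by linarith
  have c13: "K 2 0 1 0 = K 0 0 2 1" using a12 a13 a14 a23 a24 a34 b123 b124 b134 b213 b214 b234 b312 b314 b324 b412 b413 b423 by linarith
  have c14: "K 2 0 0 1 = K 0 0 2 1" using a12 a13 a14 a23 a24 a34 b123 b124 b134 b213 b214 b234 b312 b314 b324 b412 b413 b423 by linarith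
  have c21: "K 1 2 0 0 = K 0 0 2 1" using a12 a13 a14 a23 a24 a34 b123 b124 b134 b213 b214 b234 b312 b314 b324 b412 b413 b423 by linarith
  have c23: "K 0 2 1 0 = K 0 0 2 1" using a12 a13 a14 a23 a24 a34 b123 b124 b134 b213 b214 b234 b312 b314 b324 b412 b413 b423 by linarith
  have c24: "K 0 2 0 1 = K 0 0 2 1" using a12 a13 a14 a23 a24 a34 b123 b124 b134 b213 b214 b234 b312 b314 b324 b412 b413 b423 by linarith
  have c31: "K 1 0 2 0 = K 0 0 2 1" using a12 a13 a14 a23 a24 a34 b123 b124 b134 b213 b214 b234 b312 b314 b324 b412 b413 b423 by linarith
  have c32: "K 0 1 2 0 = K 0 0 2 1" using a12 a13 a14 a23 a24 a34 b123 b124 b134 b213 b214 b234 b312 b314 b324 b412 b413 b423 by linarith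
  have c41: "K 1 0 0 2 = K 0 0 2 1" using a12 a13 a14 a23 a24 a34 b123 b124 b134 b213 b214 b234 b312 b314 b324 b412 b413 b423 by linarith
  have c42: "K 0 1 0 2 = K 0 0 2 1" using a12 a13 a14 a23 a24 a34 b123 b124 b134 b213 b214 b234 b312 b314 b324 b412 b413 b423 by linarith
  have c43: "K 0 0 1 2 = K 0 0 2 1" using a12 a13 a14 a23 a24 a34 b123 b124 b134 b213 b214 b234 b312 b314 b324 b412 b413 b423 by linarith
  have u2: "K 1 0 1 1 = K 0 1 1 1" using s12[of 1 0 1 1] t3_1 t3_2 t3_3 c12 c13 c14 c21 c23 c24 c31 c32 c41 c42 c43 unfolding E_def by (simp; linarith)
  have u3: "K 1 1 0 1 = K 0 1 1 1" using s13[of 1 1 0 1] t3_1 t3_2 t3_3 c12 c13 c14 c21 c23 c24 c31 c32 c41 c42 c43 unfolding E_def by (simp; linarith)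
  have u4: "K 1 1 1 0 = K 0 1 1 1" using s14[of 1 1 1 0] t3_1 t3_2 t3_3 c12 c13 c14 c21 c23 c24 c31 c32 c41 c42 c43 unfolding E_def by (simp; linarith)
  have "f (vector [x1,x2,x3,x4]) = K 0 0 0 3 * m3 x1 x2 x3 x4 + K 0 0 2 1 * m21 x1 x2 x3 x4 + K 0 1 1 1 * m111 x1 x2 x3 x4" for x1 x2 x3 x4
    unfolding hK E_def m3_def m21_def m111_def t3_1 t3_2 t3_3 c12 c13 c14 c21 c23 c24 c31 c32 c41 c42 c43 u2 u3 u4 by (simp add: algebra_simps)
  thus ?thesis by blast
qed


lemma P1_ineq:
  assumes "0 \<le> x1" "0 \<le> x2" "0 \<le> x3" "0 \<le> x4"
  shows "3 * m111 x1 x2 x3 x4 \<le> m21 x1 x2 x3 x4"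
proof -
  define S where "S = x1*(x2-x3)^2 + x2*(x1-x3)^2 + x3*(x1-x2)^2 +
    x1*(x2-x4)^2 + x2*(x1-x4)^2 + x4*(x1-x2)^2 +
    x1*(x3-x4)^2 + x3*(x1-x4)^2 + x4*(x1-x3)^2 +
    x2*(x3-x4)^2 + x3*(x2-x4)^2 + x4*(x2-x3)^2"
  have "2 * (m21 x1 x2 x3 x4 - 3 * m111 x1 x2 x3 x4) = S"
    unfolding m21_def m111_def S_def by (simp add: power2_eq_square algebra_simps)
  moreover have "0 \<le> S"
    unfolding S_def using assms by (intro add_nonneg_nonneg mult_nonneg_nonneg) auto
  ultimately show ?thesis by (smt (verit))
qed

definition P2 :: "real\<Rightarrow>real\<Rightarrow>real\<Rightarrow>real\<Rightarrow>real" where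
  "P2 x1 x2 x3 x4 = m3 x1 x2 x3 x4 - m21 x1 x2 x3 x4 + 3 * m111 x1 x2 x3 x4"
definition P3 :: "real\<Rightarrow>real\<Rightarrow>real\<Rightarrow>real\<Rightarrow>real" where
  "P3 x1 x2 x3 x4 = 3 * m3 x1 x2 x3 x4 - 2 * m21 x1 x2 x3 x4 + 3 * m111 x1 x2 x3 x4"

lemma P2_ord:
  assumes "x1 \<ge> x2" "x2 \<ge> x3" "x3 \<ge> x4" "x4 \<ge> 0"
  shows "0 \<le> P2 x1 x2 x3 x4"
proof -
  define d p q r where "d = x4" "p = x3 - x4" "q = x2 - x3" "r = x1 - x2"
  have nn: "0 \<le> d" "0 \<le> p" "0 \<le> q" "0 \<le> r" using assms by (auto simp: d_p_q_r_def)
  have x: "x4 = d" "x3 = d + p" "x2 = d + p + q" "x1 = d + p + q + r" by (auto simp: d_p_q_r_def)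
  have "P2 x1 x2 x3 x4 = 1 * r^3 + 2 * q * r^2 + 1 * p * r^2 + 1 * p * q * r + 1 * p * q^2 + 2 * d * q * r + 2 * d * q^2 + 4 * d * p * r + 8 * d * p * q + 6 * d * p^2 + 3 * d^2 * r + 6 * d^2 * q + 9 * d^2 * p + 4 * d^3"
    unfolding x P2_def m3_def m21_def m111_def by (simp add: power2_eq_square power3_eq_cube algebra_simps)
  also have "0 \<le> 1 * r^3 + 2 * q * r^2 + 1 * p * r^2 + 1 * p * q * r + 1 * p * q^2 + 2 * d * q * r + 2 * d * q^2 + 4 * d * p * r + 8 * d * p * q + 6 * d * p^2 + 3 * d^2 * r + 6 * d^2 * q + 9 * d^2 * p + 4 * d^3" using nn by (intro add_nonneg_nonneg mult_nonneg_nonneg) auto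
  finally show ?thesis .
qed

lemma P3_ord:
  assumes "x1 \<ge> x2" "x2 \<ge> x3" "x3 \<ge> x4" "x4 \<ge> 0"
  shows "0 \<le> P3 x1 x2 x3 x4"
proof -
  define d p q r where "d = x4" "p = x3 - x4" "q = x2 - x3" "r = x1 - x2"
  have nn: "0 \<le> d" "0 \<le> p" "0 \<le> q" "0 \<le> r" using assms by (auto simp: d_p_q_r_def)
  have x: "x4 = d" "x3 = d + p" "x2 = d + p + q" "x1 = d + p + q + r" by (auto simp: d_p_q_r_def)
  have "P3 x1 x2 x3 x4 = 3 * r^3 + 7 * q * r^2 + 3 * q^2 * r + 2 * q^3 + 5 * p * r^2 + 5 * p * q * r + 5 * p * q^2 + 3 * d * r^2 + 4 * d * q * r + 4 * d * q^2 + 2 * d * p * r + 4 * d * p * q + 3 * d * p^2"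
    unfolding x P3_def m3_def m21_def m111_def by (simp add: power2_eq_square power3_eq_cube algebra_simps)
  also have "0 \<le> 3 * r^3 + 7 * q * r^2 + 3 * q^2 * r + 2 * q^3 + 5 * p * r^2 + 5 * p * q * r + 5 * p * q^2 + 3 * d * r^2 + 4 * d * q * r + 4 * d * q^2 + 2 * d * p * r + 4 * d * p * q + 3 * d * p^2" using nn by (intro add_nonneg_nonneg mult_nonneg_nonneg) auto
  finally show ?thesis .
qed


lemma wlog4:
  fixes P :: "real\<Rightarrow>real\<Rightarrow>real\<Rightarrow>real\<Rightarrow>real"
  assumes s12: "\<And>a b c d. P a b c d = P b a c d"
      and s23: "\<And>a b c d. P a b c d = P a c b d"
      and s34: "\<And>a b c d. P a b c d = P a b d c"
      and ord: "\<And>a b c d. a \<ge> b \<Longrightarrow> b \<ge> c \<Longrightarrow> c \<ge> d \<Longrightarrow> d \<ge> 0 \<Longrightarrow> 0 \<le> P a b c d"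
      and nn: "0 \<le> a" "0 \<le> b" "0 \<le> c" "0 \<le> d"
  shows "0 \<le> P a b c d"
proof -
  have L1: "0 \<le> P a b c d" if "b \<ge> c" "c \<ge> d" "d \<ge> 0" "a \<ge> 0" for a b c d
  proof -
    consider "a \<ge> b" | "b \<ge> a" "a \<ge> c" | "c \<ge> a" "a \<ge> d" | "d \<ge> a" using that by linarith
    then show ?thesis
    proof cases
      case 1 then show ?thesis using that ord by blast
    next
      case 2 then have "0 \<le> P b a c d" using that by (intro ord) auto
      then show ?thesis by (metis s12)
    next
      case 3 then have "0 \<le> P b c a d" using that by (intro ord) auto
      then show ?thesis by (metis s12 s23)
    next
      case 4 then have "0 \<le> P b c d a" using that by (intro ord) auto
      then show ?thesis by (metis s12 s23 s34)
    qed
  qed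
  have L2: "0 \<le> P a b c d" if "c \<ge> d" "d \<ge> 0" "a \<ge> 0" "b \<ge> 0" for a b c d
  proof -
    consider "b \<ge> c" | "c \<ge> b" "b \<ge> d" | "d \<ge> b" using that by linarith
    then show ?thesis
    proof cases
      case 1 then show ?thesis using that L1 by blast
    next
      case 2 then have "0 \<le> P a c b d" using that by (intro L1) auto
      then show ?thesis by (metis s23)
    next
      case 3 then have "0 \<le> P a c d b" using that by (intro L1) auto
      then show ?thesis by (metis s23 s34)
    qed
  qed
  show ?thesis
  proof (cases "c \<ge> d")
    case True then show ?thesis using nn L2 by blast
  next
    case False then have "0 \<le> P a b d c" using nn by (intro L2) auto
    then show ?thesis by (metis s34)
  qed
qed

lemma P2_nn: "0 \<le> x1 \<Longrightarrow> 0 \<le> x2 \<Longrightarrow> 0 \<le> x3 \<Longrightarrow> 0 \<le> x4 \<Longrightarrow> 0 \<le> P2 x1 x2 x3 x4"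
  apply (rule wlog4[where P=P2])
        apply (simp add: P2_def m3_def m21_def m111_def algebra_simps)
       apply (simp add: P2_def m3_def m21_def m111_def algebra_simps)
      apply (simp add: P2_def m3_def m21_def m111_def algebra_simps)
     apply (rule P2_ord; assumption)
    by assumption+

lemma P3_nn: "0 \<le> x1 \<Longrightarrow> 0 \<le> x2 \<Longrightarrow> 0 \<le> x3 \<Longrightarrow> 0 \<le> x4 \<Longrightarrow> 0 \<le> P3 x1 x2 x3 x4"
  apply (rule wlog4[where P=P3])
        apply (simp add: P3_def m3_def m21_def m111_def algebra_simps)
       apply (simp add: P3_def m3_def m21_def m111_def algebra_simps)
      apply (simp add: P3_def m3_def m21_def m111_def algebra_simps)
     apply (rule P3_ord; assumption)
    by assumption+

theorem corollary2p8:
  assumes "f \<in> H_s_4_3"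
  shows "f \<in> P_splus_4_3 \<longleftrightarrow>
           0 \<le> f (vector [0, 0, 0, 1]) \<and> 0 \<le> f (vector [0, 0, 1, 1]) \<and>
           0 \<le> f (vector [0, 1, 1, 1]) \<and> 0 \<le> f (vector [1, 1, 1, 1])"
proof -
  obtain A B C where hf: "\<And>x1 x2 x3 x4. f (vector [x1,x2,x3,x4]) = A * m3 x1 x2 x3 x4 + B * m21 x1 x2 x3 x4 + C * m111 x1 x2 x3 x4"
    using sym_structure[OF assms] by blast
  have v1: "f (vector [0, 0, 0, 1]) = A" by (simp add: hf m3_def m21_def m111_def)
  have v2: "f (vector [0, 0, 1, 1]) = 2*A + 2*B" by (simp add: hf m3_def m21_def m111_def)
  have v3: "f (vector [0, 1, 1, 1]) = 3*A + 6*B + C" by (simp add: hf m3_def m21_def m111_def)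
  have v4: "f (vector [1, 1, 1, 1]) = 4*A + 12*B + 4*C" by (simp add: hf m3_def m21_def m111_def)
  show ?thesis
  proof
    assume "f \<in> P_splus_4_3"
    hence h: "\<And>x. (\<forall>i. 0 \<le> x$i) \<Longrightarrow> 0 \<le> f x" unfolding P_splus_4_3_def by blast
    show "0 \<le> f (vector [0, 0, 0, 1]) \<and> 0 \<le> f (vector [0, 0, 1, 1]) \<and>
           0 \<le> f (vector [0, 1, 1, 1]) \<and> 0 \<le> f (vector [1, 1, 1, 1])"
      by (intro conjI h) (simp_all add: forall_4)
  next
    assume hv: "0 \<le> f (vector [0, 0, 0, 1]) \<and> 0 \<le> f (vector [0, 0, 1, 1]) \<and>
           0 \<le> f (vector [0, 1, 1, 1]) \<and> 0 \<le> f (vector [1, 1, 1, 1])"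
    have a: "0 \<le> A" "0 \<le> 2*A + 2*B" "0 \<le> 3*A + 6*B + C" "0 \<le> 4*A + 12*B + 4*C"
      using hv v1 v2 v3 v4 by auto
    have "0 \<le> f x" if hx: "\<forall>i. 0 \<le> x$i" for x :: "real^4"
    proof -
      define x1 x2 x3 x4 where "x1 = x$1" "x2 = x$2" "x3 = x$3" "x4 = x$4"
      have nn: "0 \<le> x1" "0 \<le> x2" "0 \<le> x3" "0 \<le> x4" using hx by (auto simp: x1_x2_x3_x4_def)
      have fx: "f x = A * m3 x1 x2 x3 x4 + B * m21 x1 x2 x3 x4 + C * m111 x1 x2 x3 x4"
        using hf[of x1 x2 x3 x4] by (simp add: x1_x2_x3_x4_def vec4_eta)
      define M3 M21 M111 where "M3 = m3 x1 x2 x3 x4" "M21 = m21 x1 x2 x3 x4" "M111 = m111 x1 x2 x3 x4"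
      have q0: "0 \<le> M111" unfolding M3_M21_M111_def m111_def using nn by (intro add_nonneg_nonneg mult_nonneg_nonneg) auto
      have q1: "0 \<le> M21 - 3*M111" using P1_ineq[OF nn] unfolding M3_M21_M111_def by simp
      have q2: "0 \<le> M3 - M21 + 3*M111" using P2_nn[OF nn] unfolding M3_M21_M111_def P2_def by simp
      have q3: "0 \<le> 3*M3 - 2*M21 + 3*M111" using P3_nn[OF nn] unfolding M3_M21_M111_def P3_def by simp
      have fx': "f x = A * M3 + B * M21 + C * M111" using fx unfolding M3_M21_M111_def by simp
      show ?thesis
      proof (cases "0 \<le> M3 - M21 + 2*M111")
        case True
        have "f x = A * (M3 - M21 + 2*M111) + (A+B) * (M21 - 3*M111) + (A+3*B+C) * M111"
          unfolding fx' by (simp add: algebra_simps)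
        also have "0 \<le> \<dots>"
        proof -
          have "0 \<le> A * (M3 - M21 + 2*M111)" using True a by simp
          moreover have "0 \<le> (A+B) * (M21 - 3*M111)" using a q1 by (intro mult_nonneg_nonneg) linarith+
          moreover have "0 \<le> (A+3*B+C) * M111" using a q0 by (intro mult_nonneg_nonneg) linarith+
          ultimately show ?thesis by linarith
        qed
        finally show ?thesis .
      next
        case False
        have "f x = (A+B) * (3*M3 - 2*M21 + 3*M111) + (3*A+6*B+C) * (M21 - M3 - 2*M111) + (A+3*B+C) * (M3 - M21 + 3*M111)"
          unfolding fx' by (simp add: algebra_simps)
        also have "0 \<le> \<dots>"
        proof -
          have "0 \<le> (A+B) * (3*M3 - 2*M21 + 3*M111)" using a q3 by (intro mult_nonneg_nonneg) linarith+
          moreover have "0 \<le> (3*A+6*B+C) * (M21 - M3 - 2*M111)" using a False by (intro mult_nonneg_nonneg) linarith+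
          moreover have "0 \<le> (A+3*B+C) * (M3 - M21 + 3*M111)" using a q2 by (intro mult_nonneg_nonneg) linarith+
          ultimately show ?thesis by linarith
        qed
        finally show ?thesis .
      qed
    qed
    thus "f \<in> P_splus_4_3" using assms unfolding P_splus_4_3_def by blast
  qed
qed

end
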